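(* Let $n>0$, $m\ge 0$, let $a_1,\dots,a_n$ be atoms and $l_1,\dots,l_m$ literals (atoms or negated atoms $\neg a$). Then the formula $l_1\wedge\cdots\wedge l_m\to a_1\vee\cdots\vee a_n$ is strongly equivalent to the set of the $n$ formulas, for $i=1,\dots,n$, $$(l_1\wedge\cdots\wedge l_m\wedge(a_1\to a_i)\wedge\cdots\wedge(a_n\to a_i))\to a_i.$$
   Context: Formulas are built from atoms and $\bot$ using $\wedge,\vee,\to$ ($\top:=\bot\to\bot$, $\neg F:=F\to\bot$); an empty conjunction is $\top$. Reduct: $\bot^X=\bot$; $a^X=a$ if $a\in X$, else $\bot$; $(F\otimes G)^X=F^X\otimes G^X$ if $X\models F\otimes G$, else $\bot$; $\Gamma^X=\{F^X:F\in\Gamma\}$. $X$ is a stable model of $\Gamma$ if $X\models\Gamma^X$ and no proper subset of $X$ satisfies $\Gamma^X$. Theories $\Gamma_1,\Gamma_2$ are strongly equivalent if for every theory $\Gamma$, $\Gamma_1\cup\Gamma$ and $\Gamma_2\cup\Gamma$ have the same stable models. *)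

theory Defs
  imports Main
begin

datatype 'a form = Bot | Atom 'a | And "'a form" "'a form" | Or "'a form" "'a form"
  | Imp "'a form" "'a form"

definition Top :: "'a form" where "Top = Imp Bot Bot"
definition Neg :: "'a form \<Rightarrow> 'a form" where "Neg F = Imp F Bot"

fun sat :: "'a set \<Rightarrow> 'a form \<Rightarrow> bool" where
  "sat X Bot = False"
| "sat X (Atom a) = (a \<in> X)"
| "sat X (And F G) = (sat X F \<and> sat X G)"
| "sat X (Or F G) = (sat X F \<or> sat X G)"
| "sat X (Imp F G) = (sat X F \<longrightarrow> sat X G)"

definition sat_th :: "'a set \<Rightarrow> 'a form set \<Rightarrow> bool" where
  "sat_th X \<Gamma> = (\<forall>F\<in>\<Gamma>. sat X F)"

fun reduct :: "'a form \<Rightarrow> 'a set \<Rightarrow> 'a form" where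
  "reduct Bot X = Bot"
| "reduct (Atom a) X = (if a \<in> X then Atom a else Bot)"
| "reduct (And F G) X = (if sat X (And F G) then And (reduct F X) (reduct G X) else Bot)"
| "reduct (Or F G) X = (if sat X (Or F G) then Or (reduct F X) (reduct G X) else Bot)"
| "reduct (Imp F G) X = (if sat X (Imp F G) then Imp (reduct F X) (reduct G X) else Bot)"

definition reduct_th :: "'a form set \<Rightarrow> 'a set \<Rightarrow> 'a form set" where
  "reduct_th \<Gamma> X = (\<lambda>F. reduct F X) ` \<Gamma>"

definition stable_model :: "'a set \<Rightarrow> 'a form set \<Rightarrow> bool" where
  "stable_model X \<Gamma> = (sat_th X (reduct_th \<Gamma> X) \<and>
     (\<forall>Y. Y \<subset> X \<longrightarrow> \<not> sat_th Y (reduct_th \<Gamma> X)))"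

definition strongly_equiv :: "'a form set \<Rightarrow> 'a form set \<Rightarrow> bool" where
  "strongly_equiv \<Gamma>1 \<Gamma>2 = (\<forall>\<Gamma> X. stable_model X (\<Gamma>1 \<union> \<Gamma>) \<longleftrightarrow> stable_model X (\<Gamma>2 \<union> \<Gamma>))"

definition literal :: "'a form \<Rightarrow> bool" where
  "literal F = (\<exists>a. F = Atom a \<or> F = Neg (Atom a))"

fun big_and :: "'a form list \<Rightarrow> 'a form" where
  "big_and [] = Top"
| "big_and [F] = F"
| "big_and (F # Fs) = And F (big_and Fs)"

fun big_or :: "'a form list \<Rightarrow> 'a form" where
  "big_or [] = Bot"
| "big_or [F] = F"
| "big_or (F # Fs) = Or F (big_or Fs)"

end

theory Submission
  imports Defs
begin

lemma L1: "sat Y (reduct F X) \<Longrightarrow> sat X F"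
  by (induction F) (auto split: if_splits)

lemma L2: "sat X (reduct F X) = sat X F"
  by (induction F) auto

lemma red_and: "sat Y (reduct (And F G) X) = (sat Y (reduct F X) \<and> sat Y (reduct G X))"
  using L1[of Y "And F G" X] L1[of Y F X] L1[of Y G X] by auto

lemma red_or: "sat Y (reduct (Or F G) X) = (sat Y (reduct F X) \<or> sat Y (reduct G X))"
  using L1[of Y F X] L1[of Y G X] by auto

lemma red_imp: "sat Y (reduct (Imp F G) X) = (sat X (Imp F G) \<and> (sat Y (reduct F X) \<longrightarrow> sat Y (reduct G X)))"
  by auto

lemma red_atom: "Y \<subseteq> X \<Longrightarrow> sat Y (reduct (Atom a) X) = (a \<in> Y)"
  by auto

lemma sat_big_and: "sat X (big_and Fs) = (\<forall>F\<in>set Fs. sat X F)"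
  by (induction Fs rule: big_and.induct) (auto simp: Top_def)

lemma red_big_and: "sat Y (reduct (big_and Fs) X) = (\<forall>F\<in>set Fs. sat Y (reduct F X))"
  by (induction Fs rule: big_and.induct) (auto simp: Top_def red_and simp del: reduct.simps(3) sat.simps(3))

lemma sat_big_or: "sat X (big_or Fs) = (\<exists>F\<in>set Fs. sat X F)"
  by (induction Fs rule: big_or.induct) auto

lemma red_big_or: "sat Y (reduct (big_or Fs) X) = (\<exists>F\<in>set Fs. sat Y (reduct F X))"
  by (induction Fs rule: big_or.induct) (auto simp: red_or simp del: reduct.simps(4) sat.simps(4))

lemma se:
  assumes "\<And>Y X. Y \<subseteq> X \<Longrightarrow> sat_th Y (reduct_th G1 X) = sat_th Y (reduct_th G2 X)"
  shows "strongly_equiv G1 G2"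
proof -
  have u: "sat_th Y (reduct_th (A \<union> B) X) = (sat_th Y (reduct_th A X) \<and> sat_th Y (reduct_th B X))"
    for Y X A B by (auto simp: sat_th_def reduct_th_def)
  show ?thesis unfolding strongly_equiv_def stable_model_def u
    using assms by (metis order_refl psubset_imp_subset)
qed

lemma key:
  assumes n: "length as > 0" and YX: "Y \<subseteq> X"
  shows "sat_th Y (reduct_th {Imp (big_and ls) (big_or (map Atom as))} X) =
     sat_th Y (reduct_th {Imp (big_and (ls @ map (\<lambda>aj. Imp (Atom aj) (Atom (as ! i))) as)) (Atom (as ! i)) | i. i < length as} X)"
proof -
  define P where "P = (\<forall>F\<in>set ls. sat Y (reduct F X))"
  define Q where "Q = (\<forall>F\<in>set ls. sat X F)"
  have PQ: "P \<Longrightarrow> Q" unfolding P_def Q_def using L1 by blast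
  have L: "sat_th Y (reduct_th {Imp (big_and ls) (big_or (map Atom as))} X) =
     ((Q \<longrightarrow> (\<exists>a\<in>set as. a \<in> X)) \<and> (P \<longrightarrow> (\<exists>a\<in>set as. a \<in> Y)))"
    unfolding sat_th_def reduct_th_def P_def Q_def
    using YX
    by (simp add: red_big_and sat_big_and red_big_or sat_big_or red_imp red_atom del: reduct.simps sat.simps) (simp add: sat_big_and sat_big_or)
  have C: "sat Y (reduct (Imp (big_and (ls @ map (\<lambda>aj. Imp (Atom aj) (Atom (as ! i))) as)) (Atom (as ! i))) X)
     = ((Q \<and> (\<forall>j\<in>set as. j \<in> X \<longrightarrow> as!i \<in> X) \<longrightarrow> as!i \<in> X) \<and>
        (P \<and> (\<forall>j\<in>set as. (j \<in> X \<longrightarrow> as!i \<in> X) \<and> (j \<in> Y \<longrightarrow> as!i \<in> Y)) \<longrightarrow> as!i \<in> Y))" for i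
    unfolding P_def Q_def
    using YX
    by (simp add: red_big_and sat_big_and red_imp red_atom del: reduct.simps sat.simps) (auto simp: sat_big_and red_imp red_atom ball_Un)
  have R: "sat_th Y (reduct_th {Imp (big_and (ls @ map (\<lambda>aj. Imp (Atom aj) (Atom (as ! i))) as)) (Atom (as ! i)) | i. i < length as} X)
     = (\<forall>i<length as. sat Y (reduct (Imp (big_and (ls @ map (\<lambda>aj. Imp (Atom aj) (Atom (as ! i))) as)) (Atom (as ! i))) X))"
    unfolding sat_th_def reduct_th_def by blast
  show ?thesis unfolding L R C
  proof
    assume h: "(Q \<longrightarrow> (\<exists>a\<in>set as. a \<in> X)) \<and> (P \<longrightarrow> (\<exists>a\<in>set as. a \<in> Y))"
    show "\<forall>i<length as. (Q \<and> (\<forall>j\<in>set as. j \<in> X \<longrightarrow> as!i \<in> X) \<longrightarrow> as!i \<in> X) \<and>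
        (P \<and> (\<forall>j\<in>set as. (j \<in> X \<longrightarrow> as!i \<in> X) \<and> (j \<in> Y \<longrightarrow> as!i \<in> Y)) \<longrightarrow> as!i \<in> Y)"
      using h PQ by blast
  next
    assume h: "\<forall>i<length as. (Q \<and> (\<forall>j\<in>set as. j \<in> X \<longrightarrow> as!i \<in> X) \<longrightarrow> as!i \<in> X) \<and>
        (P \<and> (\<forall>j\<in>set as. (j \<in> X \<longrightarrow> as!i \<in> X) \<and> (j \<in> Y \<longrightarrow> as!i \<in> Y)) \<longrightarrow> as!i \<in> Y)"
    have 1: "Q \<longrightarrow> (\<exists>a\<in>set as. a \<in> X)"
    proof
      assume q: Q
      show "\<exists>a\<in>set as. a \<in> X"
      proof (rule ccontr)
        assume "\<not> (\<exists>a\<in>set as. a \<in> X)"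
        moreover have "as!0 \<in> set as" using n by simp
        ultimately show False using h q n by blast
      qed
    qed
    have 2: "P \<longrightarrow> (\<exists>a\<in>set as. a \<in> Y)"
    proof
      assume p: P
      then obtain a where a: "a \<in> set as" "a \<in> X" using 1 PQ by blast
      then obtain i where i: "i < length as" "as!i = a" by (auto simp: in_set_conv_nth)
      show "\<exists>a\<in>set as. a \<in> Y"
      proof (rule ccontr)
        assume "\<not> (\<exists>a\<in>set as. a \<in> Y)"
        then show False using h p i a by (metis nth_mem)
      qed
    qed
    show "(Q \<longrightarrow> (\<exists>a\<in>set as. a \<in> X)) \<and> (P \<longrightarrow> (\<exists>a\<in>set as. a \<in> Y))" using 1 2 by blast
  qed
qed

theorem lemma1:
  fixes as :: "'a list" and ls :: "'a form list"
  assumes "length as > 0"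
    and "\<forall>l\<in>set ls. literal l"
  shows "strongly_equiv
     {Imp (big_and ls) (big_or (map Atom as))}
     {Imp (big_and (ls @ map (\<lambda>aj. Imp (Atom aj) (Atom (as ! i))) as)) (Atom (as ! i)) | i. i < length as}"
  by (rule se, rule key[OF assms(1)])

end
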